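(* Let $p\ge3$ and consider the 1D FUSE semi-discretisation (context) of $\partial_t u+\partial_x F(u)=0$, with $F$ continuously differentiable, on a periodic mesh, using as reference nodes the Gauss–Legendre-plus-endpoints nodes: $r_0=-1$, $r_p=1$, and $r_1<\dots<r_{p-1}$ the $p-1$ Gauss–Legendre quadrature points on $[-1,1]$ with weights $\omega_1,\dots,\omega_{p-1}$. For each element define $\bar u_k=\tfrac12\sum_{i=1}^{p-1}\omega_i\,u_{i,k}$. Then (i) $\bar u_k=\frac{1}{|K_k|}\int_{K_k}u_h\,dx$, where $u_h|_{K_k}$ is the degree-$\le p$ interpolant of the nodal values on $K_k$; (ii) along solutions of the FUSE semi-discretisation, $$\frac{d\bar u_k}{dt}+\frac{1}{|K_k|}\Big(F(u_{p,k})-F(u_{0,k})\Big)=0\quad\text{for every }k;$$ and consequently (iii) $\frac{d}{dt}\sum_{k=1}^N |K_k|\,\bar u_k=0$, i.e. $\int_\Omega u_h\,dx$ is conserved (for a uniform mesh, $\sum_k\bar u_k$ is conserved).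
   Context: Setting: $\Omega=[0,1]$, periodic, mesh $0=x_0<\dots<x_N=1$, elements $K_k=[x_{k-1},x_k]$ (indices mod $N$), $|K_k|=x_k-x_{k-1}$. Nodes $s_{i,k}=x_{k-1}+\tfrac{r_i+1}{2}|K_k|$, $i=0,\dots,p$, with boundary nodes shared ($s_{p,k}=s_{0,k+1}$, a single nodal value, so $u_{p,k}=u_{0,k+1}$). $F_h^{(k)}$ is the polynomial of degree $\le p$ on $K_k$ with $F_h^{(k)}(s_{i,k})=F(u_{i,k})$. FUSE semi-discretisation: interior nodes $\frac{d}{dt}u_{i,k}=-(F_h^{(k)})'(s_{i,k})$ for $1\le i\le p-1$; at a shared node $s=s_{p,k}=s_{0,k+1}$ with value $u_s$, $\frac{d}{dt}u_s=-(F_h^{(k)})'(s)$ if $F'(u_s)>0$ and $-(F_h^{(k+1)})'(s)$ otherwise. *)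

theory Defs
  imports "HOL-Analysis.Analysis" "HOL-Computational_Algebra.Polynomial"
begin

definition legendre_poly :: "nat \<Rightarrow> real poly" where
  "legendre_poly n = smult (1 / (2 ^ n * fact n)) ((pderiv ^^ n) ([:-1, 0, 1:] ^ n))"

definition gl_nodes :: "nat \<Rightarrow> (nat \<Rightarrow> real) \<Rightarrow> bool" where
  "gl_nodes m r \<longleftrightarrow> (\<forall>i\<in>{1..m}. poly (legendre_poly m) (r i) = 0) \<and>
     (\<forall>i j. 1 \<le> i \<longrightarrow> i < j \<longrightarrow> j \<le> m \<longrightarrow> r i < r j)"

definition gl_weight :: "nat \<Rightarrow> (nat \<Rightarrow> real) \<Rightarrow> nat \<Rightarrow> real" where
  "gl_weight m r i = integral {-1..1} (\<lambda>y. \<Prod>j\<in>{1..m}-{i}. (y - r j) / (r i - r j))"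

definition lagrange_interp :: "nat \<Rightarrow> (nat \<Rightarrow> real) \<Rightarrow> (nat \<Rightarrow> real) \<Rightarrow> real \<Rightarrow> real" where
  "lagrange_interp p s v y = (\<Sum>i\<le>p. v i * (\<Prod>j\<in>{..p}-{i}. (y - s j) / (s i - s j)))"

definition fuse_node :: "(nat \<Rightarrow> real) \<Rightarrow> (nat \<Rightarrow> real) \<Rightarrow> nat \<Rightarrow> nat \<Rightarrow> real" where
  "fuse_node x r k i = x (k - 1) + (r i + 1) / 2 * (x k - x (k - 1))"

definition next_el :: "nat \<Rightarrow> nat \<Rightarrow> nat" where
  "next_el N k = (if k = N then 1 else k + 1)"

end

theory Submission
  imports Defs
begin


lemma ftc_poly:
  fixes P :: "real poly" assumes "a \<le> b"
  shows "integral {a..b} (poly (pderiv P)) = poly P b - poly P a"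
proof -
  have "(poly (pderiv P) has_integral (poly P b - poly P a)) {a..b}"
    apply (rule fundamental_theorem_of_calculus[OF assms])
    apply (simp add: has_real_derivative_iff_has_vector_derivative[symmetric])
    by (meson DERIV_subset poly_DERIV top_greatest)
  thus ?thesis by (rule integral_unique)
qed

lemma integrable_poly: "(poly (P::real poly)) integrable_on {a..b}"
  by (intro integrable_continuous_real continuous_intros)

lemma dvd_pderiv_pow:
  fixes P :: "real poly"
  assumes "[:-c,1:]^(Suc n) dvd P" shows "[:-c,1:]^n dvd pderiv P"
proof -
  obtain G where G: "P = [:-c,1:]^(Suc n) * G" using assms by (auto elim: dvdE)
  have "pderiv P = [:-c,1:]^n * (smult (of_nat (Suc n)) G + [:-c,1:] * pderiv G)"
    unfolding G pderiv_mult pderiv_power_Suc by (simp add: algebra_simps pderiv_pCons)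
  thus ?thesis by simp
qed

lemma dvd_funpow_pderiv:
  fixes P :: "real poly"
  assumes "[:-c,1:]^(k + n) dvd P" shows "[:-c,1:]^n dvd (pderiv^^k) P"
  using assms
proof (induction k arbitrary: P)
  case 0 then show ?case by simp
next
  case (Suc k)
  have "[:-c,1:]^(k+n) dvd pderiv P" using Suc.prems dvd_pderiv_pow[of c "k+n" P] by simp
  from Suc.IH[OF this] show ?case by (simp add: funpow_Suc_right del: funpow.simps)
qed

lemma nonroot_funpow_pderiv:
  fixes G :: "real poly"
  assumes "poly G c \<noteq> 0"
  shows "poly ((pderiv^^n) ([:-c,1:]^n * G)) c \<noteq> 0"
  using assms
proof (induction n arbitrary: G)
  case 0 then show ?case by simp
next
  case (Suc n)
  have "pderiv ([:-c,1:]^(Suc n) * G) = [:-c,1:]^n * (smult (of_nat (Suc n)) G + [:-c,1:] * pderiv G)"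
    unfolding pderiv_mult pderiv_power_Suc by (simp add: algebra_simps pderiv_pCons)
  moreover have "poly (smult (of_nat (Suc n)) G + [:-c,1:] * pderiv G) c \<noteq> 0"
    using Suc.prems by simp
  ultimately show ?case using Suc.IH by (simp add: funpow_Suc_right del: funpow.simps)
qed



lemma W_factor: "[:-1,0,1:] = [:-1,1:] * [:1::real,1:]"
  by (simp add: poly_eq_poly_eq_iff[symmetric] algebra_simps)

lemma W_pow: "[:-1,0,1:]^m = [:-1,1:]^m * [:1::real,1:]^m"
  unfolding W_factor power_mult_distrib ..

lemma legendre_root1: "poly (legendre_poly m) 1 \<noteq> 0"
proof -
  have "poly ((pderiv^^m) ([:-1,1:]^m * [:1::real,1:]^m)) 1 \<noteq> 0"
    using nonroot_funpow_pderiv[of "[:1::real,1:]^m" 1 m] by simp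
  thus ?thesis unfolding legendre_poly_def by (simp add: W_pow)
qed

lemma legendre_rootm1: "poly (legendre_poly m) (-1) \<noteq> 0"
proof -
  have "poly ((pderiv^^m) ([:-(-1),1:]^m * [:-1::real,1:]^m)) (-1) \<noteq> 0"
    using nonroot_funpow_pderiv[of "[:-1::real,1:]^m" "-1" m] by simp
  thus ?thesis unfolding legendre_poly_def by (simp add: W_pow mult.commute)
qed

lemma degree_funpow_pderiv: "degree ((pderiv^^k) (P::real poly)) = degree P - k"
  by (induction k) (auto simp: degree_pderiv)

lemma legendre_degree: "degree (legendre_poly m) = m"
proof -
  have "degree ([:-1,0,1:]^m :: real poly) = 2*m" by (subst degree_power_eq) auto
  thus ?thesis unfolding legendre_poly_def by (simp add: degree_funpow_pderiv)
qed

lemma W_boundary: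
  assumes "k < m" "c = 1 \<or> c = -1"
  shows "poly ((pderiv^^k) ([:-1,0,1:]^m :: real poly)) c = 0"
proof -
  have "[:-c,1:]^(k + (m-k)) dvd ([:-1,0,1:]^m :: real poly)"
    using assms by (auto simp: W_pow)
  hence "[:-c,1:]^(m-k) dvd (pderiv^^k) ([:-1,0,1:]^m :: real poly)"
    by (rule dvd_funpow_pderiv)
  moreover have "[:-c,1:] dvd [:-c,1:]^(m-k)" using assms(1)
    by (metis Suc_diff_Suc dvd_power nat.distinct(1) zero_less_Suc)
  ultimately have "[:-c,1:] dvd (pderiv^^k) ([:-1,0,1:]^m :: real poly)"
    using dvd_trans by blast
  thus ?thesis by (simp add: poly_eq_0_iff_dvd)
qed

lemma W_orth:
  assumes "k \<le> m" "degree q < k \<or> q = 0"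
  shows "integral {-1..1} (poly ((pderiv^^k) ([:-1,0,1:]^m :: real poly) * q)) = 0"
  using assms
proof (induction k arbitrary: q)
  case 0 then show ?case by simp
next
  case (Suc k)
  define D where "D = (pderiv^^k) ([:-1,0,1:]^m :: real poly)"
  have D1: "(pderiv^^(Suc k)) ([:-1,0,1:]^m :: real poly) = pderiv D"
    by (simp add: D_def)
  have "integral {-1..1} (poly (pderiv (D * q))) = poly (D*q) 1 - poly (D*q) (-1)"
    by (rule ftc_poly) simp
  also have "\<dots> = 0" using W_boundary[of k m] Suc.prems by (simp add: D_def)
  finally have "integral {-1..1} (poly (pderiv (D * q))) = 0" .
  moreover have "integral {-1..1} (poly (pderiv (D * q))) =
     integral {-1..1} (poly (D * pderiv q)) + integral {-1..1} (poly (pderiv D * q))"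
  proof -
    have "poly (pderiv (D * q)) = (\<lambda>x. poly (D * pderiv q) x + poly (pderiv D * q) x)"
      by (auto simp: fun_eq_iff pderiv_mult algebra_simps)
    thus ?thesis by (simp only:) (rule integral_add[OF integrable_poly integrable_poly])
  qed
  moreover have "integral {-1..1} (poly (D * pderiv q)) = 0"
  proof -
    have "degree (pderiv q) < k \<or> pderiv q = 0"
      using Suc.prems(2) by (cases "degree q = 0") (auto simp: degree_pderiv pderiv_eq_0_iff)
    thus ?thesis unfolding D_def using Suc.prems(1) by (intro Suc.IH) auto
  qed
  ultimately show ?case unfolding D1 by linarith
qed

lemma legendre_orth:
  assumes "degree q < m \<or> q = 0"
  shows "integral {-1..1} (poly (legendre_poly m * q)) = 0"
proof -
  have "poly (legendre_poly m * q) = (\<lambda>x. (1 / (2 ^ m * fact m)) * poly ((pderiv^^m) ([:-1,0,1:]^m :: real poly) * q) x)"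
    by (auto simp: legendre_poly_def fun_eq_iff)
  thus ?thesis using W_orth[of m m q] assms by (simp only: integral_mult_right)
qed



definition Lb :: "nat \<Rightarrow> (nat \<Rightarrow> real) \<Rightarrow> nat \<Rightarrow> real poly" where
  "Lb m r i = (\<Prod>j\<in>{1..m}-{i}. smult (1/(r i - r j)) [:-r j, 1:])"

lemma poly_Lb: "poly (Lb m r i) y = (\<Prod>j\<in>{1..m}-{i}. (y - r j) / (r i - r j))"
  unfolding Lb_def poly_prod by (intro prod.cong) (auto simp: diff_divide_distrib)

lemma gl_weight_Lb: "gl_weight m r i = integral {-1..1} (poly (Lb m r i))"
  unfolding gl_weight_def by (simp add: poly_Lb[abs_def])

lemma degree_Lb: assumes "i \<in> {1..m}" shows "degree (Lb m r i) \<le> m - 1"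
proof -
  have "degree (Lb m r i) \<le> sum (degree \<circ> (\<lambda>j. smult (1/(r i - r j)) [:-r j, 1:])) ({1..m}-{i})"
    unfolding Lb_def by (rule degree_prod_sum_le) simp
  also have "\<dots> \<le> sum (\<lambda>_. 1) ({1..m}-{i})"
    by (intro sum_mono) auto
  also have "\<dots> = m - 1" using assms by (simp add: card_Diff_singleton)
  finally show ?thesis .
qed

lemma poly_Lb_node:
  assumes inj: "inj_on r {1..m}" and "i \<in> {1..m}" "j \<in> {1..m}"
  shows "poly (Lb m r i) (r j) = (if i = j then 1 else 0)"
proof (cases "i = j")
  case True
  have "(\<Prod>k\<in>{1..m}-{i}. (r i - r k) / (r i - r k)) = (\<Prod>k\<in>{1..m}-{i}. (1::real))"
  proof (intro prod.cong refl)
    fix k assume k: "k \<in> {1..m}-{i}"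
    then have "r i \<noteq> r k" using inj assms(2) by (metis DiffE inj_on_eq_iff singletonI)
    thus "(r i - r k)/(r i - r k) = 1" by simp
  qed
  thus ?thesis using True by (simp add: poly_Lb)
next
  case False
  thus ?thesis using assms by (auto simp: poly_Lb intro!: prod_zero bexI[of _ j])
qed

lemma interp_exact:
  fixes q :: "real poly"
  assumes inj: "inj_on r {1..m}" and m1: "m \<ge> 1" and dq: "degree q < m"
  shows "q = (\<Sum>i\<in>{1..m}. smult (poly q (r i)) (Lb m r i))"
proof (rule ccontr)
  define D where "D = q - (\<Sum>i\<in>{1..m}. smult (poly q (r i)) (Lb m r i))"
  assume "q \<noteq> (\<Sum>i\<in>{1..m}. smult (poly q (r i)) (Lb m r i))"
  hence D0: "D \<noteq> 0" by (simp add: D_def)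
  have "degree (\<Sum>i\<in>{1..m}. smult (poly q (r i)) (Lb m r i)) \<le> m - 1"
    by (rule degree_sum_le) (simp, meson degree_Lb degree_smult_le order.trans)
  hence degD: "degree D < m" using dq m1 unfolding D_def
    using degree_diff_le_max[of q "\<Sum>i\<in>{1..m}. smult (poly q (r i)) (Lb m r i)"] by linarith
  have roots: "r ` {1..m} \<subseteq> {x. poly D x = 0}"
  proof
    fix y assume "y \<in> r ` {1..m}"
    then obtain j where j: "j \<in> {1..m}" "y = r j" by auto
    have "(\<Sum>i\<in>{1..m}. poly q (r i) * poly (Lb m r i) (r j)) = (\<Sum>i\<in>{1..m}. if i = j then poly q (r i) else 0)"
      using poly_Lb_node[OF inj _ j(1)] by (intro sum.cong) auto
    also have "\<dots> = poly q (r j)" using j(1) by simp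
    finally show "y \<in> {x. poly D x = 0}" using j by (simp add: D_def poly_sum)
  qed
  have "m = card (r ` {1..m})" using inj by (simp add: card_image)
  also have "\<dots> \<le> card {x. poly D x = 0}"
    by (rule card_mono[OF poly_roots_finite[OF D0] roots])
  also have "\<dots> \<le> degree D" by (rule card_poly_roots_bound[OF D0])
  finally show False using degD by simp
qed

lemma gl_inj: assumes "gl_nodes m r" shows "inj_on r {1..m}"
proof (rule inj_onI)
  fix i j assume ij: "i \<in> {1..m}" "j \<in> {1..m}" "r i = r j"
  show "i = j"
  proof (rule ccontr)
    assume "i \<noteq> j"
    hence "i < j \<or> j < i" by auto
    thus False using assms ij unfolding gl_nodes_def by (metis atLeastAtMost_iff less_irrefl)
  qed
qed

lemma gauss_quad:
  fixes q :: "real poly"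
  assumes gl: "gl_nodes m r" and m1: "m \<ge> 1" and dq: "degree q \<le> 2*m - 1"
  shows "integral {-1..1} (poly q) = (\<Sum>i\<in>{1..m}. gl_weight m r i * poly q (r i))"
proof -
  define L where "L = legendre_poly m"
  have inj: "inj_on r {1..m}" by (rule gl_inj[OF gl])
  have degL: "degree L = m" by (simp add: L_def legendre_degree)
  hence L0: "L \<noteq> 0" using m1 by auto
  have rootL: "poly L (r i) = 0" if "i \<in> {1..m}" for i
    using gl that unfolding gl_nodes_def L_def by auto
  define d where "d = q div L"
  define e where "e = q mod L"
  have qde: "q = L * d + e" by (simp add: d_def e_def mult.commute)
  have dege: "degree e < m"
  proof (cases "e = 0")
    case True thus ?thesis using m1 by simp
  next
    case False thus ?thesis using degree_mod_less[OF L0, of q] degL by (simp add: e_def)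
  qed
  have degd: "degree d < m \<or> d = 0"
  proof (cases "d = 0")
    case False
    have "degree (L * d) = m + degree d" using False L0 degL by (simp add: degree_mult_eq)
    moreover have "L * d = q - e" using qde by simp
    moreover have "degree (q - e) \<le> 2*m - 1"
      using degree_diff_le_max[of q e] dq dege by linarith
    ultimately have "m + degree d \<le> 2*m - 1" by simp
    thus ?thesis using m1 by arith
  qed simp
  have "integral {-1..1} (poly q) = integral {-1..1} (\<lambda>x. poly (L*d) x + poly e x)"
    by (subst qde) (simp only: poly_add[abs_def])
  also have "\<dots> = integral {-1..1} (poly (L*d)) + integral {-1..1} (poly e)"
    by (rule integral_add[OF integrable_poly integrable_poly])
  also have "integral {-1..1} (poly (L*d)) = 0"
    unfolding L_def by (rule legendre_orth[OF degd])
  also have "integral {-1..1} (poly e) = integral {-1..1} (\<lambda>x. \<Sum>i\<in>{1..m}. poly e (r i) * poly (Lb m r i) x)"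
  proof -
    have "poly e = (\<lambda>x. \<Sum>i\<in>{1..m}. poly e (r i) * poly (Lb m r i) x)"
      by (rule ext, subst (1) interp_exact[OF inj m1 dege]) (simp add: poly_sum)
    thus ?thesis by simp
  qed
  also have "\<dots> = (\<Sum>i\<in>{1..m}. integral {-1..1} (\<lambda>x. poly e (r i) * poly (Lb m r i) x))"
    by (rule integral_sum) (auto intro!: integrable_continuous_real continuous_intros)
  also have "\<dots> = (\<Sum>i\<in>{1..m}. gl_weight m r i * poly q (r i))"
  proof (intro sum.cong refl)
    fix i assume i: "i \<in> {1..m}"
    have "poly q (r i) = poly (L * d + e) (r i)" using qde by simp
    hence "poly e (r i) = poly q (r i)" using rootL[OF i] by simp
    thus "integral {-1..1} (\<lambda>x. poly e (r i) * poly (Lb m r i) x) = gl_weight m r i * poly q (r i)"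
      by (simp add: gl_weight_Lb integral_mult_right)
  qed
  finally show ?thesis by simp
qed



definition LIp :: "nat \<Rightarrow> (nat \<Rightarrow> real) \<Rightarrow> (nat \<Rightarrow> real) \<Rightarrow> real poly" where
  "LIp p s v = (\<Sum>i\<le>p. smult (v i) (\<Prod>j\<in>{..p}-{i}. smult (1/(s i - s j)) [:-s j, 1:]))"

lemma lagrange_LIp: "lagrange_interp p s v = poly (LIp p s v)"
  unfolding lagrange_interp_def LIp_def
  by (rule ext) (auto simp: poly_sum poly_prod diff_divide_distrib intro!: sum.cong prod.cong)

lemma degree_LIp: "degree (LIp p s v) \<le> p"
  unfolding LIp_def
proof (rule degree_sum_le)
  fix i assume i: "i \<in> {..p}"
  have "degree (\<Prod>j\<in>{..p}-{i}. smult (1/(s i - s j)) [:-s j, 1:]) \<le> sum (degree \<circ> (\<lambda>j. smult (1/(s i - s j)) [:-s j, 1:])) ({..p}-{i})"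
    by (rule degree_prod_sum_le) simp
  also have "\<dots> \<le> sum (\<lambda>_. 1) ({..p}-{i})"
    by (intro sum_mono) auto
  also have "\<dots> = p" using i by (simp add: card_Diff_singleton)
  finally show "degree (smult (v i) (\<Prod>j\<in>{..p}-{i}. smult (1/(s i - s j)) [:-s j, 1:])) \<le> p"
    using degree_smult_le order.trans by blast
qed simp

lemma lagrange_node:
  assumes inj: "inj_on s {..p}" and j: "j \<le> p"
  shows "lagrange_interp p s v (s j) = v j"
proof -
  have "lagrange_interp p s v (s j) = (\<Sum>i\<le>p. if i = j then v j else 0)"
    unfolding lagrange_interp_def
  proof (intro sum.cong refl)
    fix i assume i: "i \<in> {..p}"
    show "v i * (\<Prod>k\<in>{..p}-{i}. (s j - s k) / (s i - s k)) = (if i = j then v j else 0)"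
    proof (cases "i = j")
      case True
      have "(\<Prod>k\<in>{..p}-{i}. (s j - s k) / (s i - s k)) = (\<Prod>k\<in>{..p}-{i}. 1)"
      proof (intro prod.cong refl)
        fix k assume k: "k \<in> {..p}-{i}"
        then have "s i \<noteq> s k" using inj i by (metis DiffE inj_on_eq_iff singletonI)
        thus "(s j - s k) / (s i - s k) = 1" using True by simp
      qed
      thus ?thesis using True by simp
    next
      case False
      have "(\<Prod>k\<in>{..p}-{i}. (s j - s k) / (s i - s k)) = 0"
        using False j by (intro prod_zero) (auto intro!: bexI[of _ j])
      thus ?thesis using False by simp
    qed
  qed
  also have "\<dots> = v j" using j by simp
  finally show ?thesis .
qed

lemma next_el_sum:
  assumes "N \<ge> 1"
  shows "(\<Sum>k=1..N. f (next_el N k)) = (\<Sum>k=1..N. (f k :: real))"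
proof (rule sum.reindex_bij_witness[of _ "\<lambda>k. if k = 1 then N else k - 1" "next_el N"])
qed (use assms in \<open>auto simp: next_el_def\<close>)



lemma r_inj:
  assumes p3: "p \<ge> 3" and gl: "gl_nodes (p-1) r" and r0: "r 0 = -1" and rp: "r p = 1"
  shows "inj_on r {..p}"
proof -
  have mid: "r i \<noteq> -1 \<and> r i \<noteq> 1" if i: "i \<in> {1..p-1}" for i
  proof -
    have "poly (legendre_poly (p-1)) (r i) = 0" using gl i unfolding gl_nodes_def by auto
    thus ?thesis using legendre_root1[of "p-1"] legendre_rootm1[of "p-1"] by auto
  qed
  have inj1: "inj_on r {1..p-1}" by (rule gl_inj[OF gl])
  show ?thesis
  proof (rule inj_onI)
    fix i j assume i: "i \<in> {..p}" and j: "j \<in> {..p}" and eq: "r i = r j"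
    have ci: "i = 0 \<or> i = p \<or> i \<in> {1..p-1}" using i by auto
    have cj: "j = 0 \<or> j = p \<or> j \<in> {1..p-1}" using j by auto
    from ci cj show "i = j"
    proof (elim disjE)
    qed (use eq r0 rp mid inj1 in \<open>auto dest: inj_onD\<close>)
  qed
qed

lemma subst_affine:
  fixes P :: "real poly"
  assumes h: "x0 < x1"
  shows "integral {x0..x1} (poly P) =
           (x1 - x0) / 2 * integral {-1..1} (poly (pcompose P [:x0 + (x1-x0)/2, (x1-x0)/2:]))"
proof -
  define A where "A = [:x0 + (x1-x0)/2, (x1-x0)/2:]"
  have pA: "poly A y = x0 + (y+1)/2 * (x1 - x0)" for y by (simp add: A_def field_simps)
  have "((\<lambda>y. ((x1-x0)/2) *\<^sub>R poly P (poly A y)) has_integral integral {poly A (-1)..poly A 1} (poly P)) {-1..1}"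
  proof (rule has_integral_substitution[where c = x0 and d = x1])
    show "poly A (-1) \<le> poly A 1" using h by (simp add: pA)
    show "poly A ` {-1..1} \<subseteq> {x0..x1}"
    proof
      fix z assume "z \<in> poly A ` {-1..1}"
      then obtain y where y: "y \<in> {-1..1}" "z = poly A y" by auto
      have "0 \<le> (y+1)/2 * (x1 - x0)" using y h by auto
      moreover have "(y+1)/2 * (x1 - x0) \<le> 1 * (x1 - x0)"
        using y h by (intro mult_right_mono) auto
      ultimately show "z \<in> {x0..x1}" using y by (simp add: pA)
    qed
    show "continuous_on {x0..x1} (poly P)" by (intro continuous_intros)
    fix y
    show "(poly A has_real_derivative (x1-x0)/2) (at y within {-1..1})"
    proof -
      have "(poly A has_real_derivative poly (pderiv A) y) (at y)" by (rule poly_DERIV)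
      moreover have "poly (pderiv A) y = (x1-x0)/2" by (simp add: A_def pderiv_pCons)
      ultimately show ?thesis using has_field_derivative_at_within by metis
    qed
  qed simp
  moreover have "poly A (-1) = x0" "poly A 1 = x1" by (simp_all add: pA)
  ultimately have "((\<lambda>y. (x1-x0)/2 * poly (pcompose P A) y) has_integral integral {x0..x1} (poly P)) {-1..1}"
    by (simp add: poly_pcompose)
  hence "integral {x0..x1} (poly P) = integral {-1..1} (\<lambda>y. (x1-x0)/2 * poly (pcompose P A) y)"
    by (rule integral_unique[symmetric])
  thus ?thesis unfolding A_def by (simp only: integral_mult_right)
qed



lemma s_inj:
  fixes r :: "nat \<Rightarrow> real"
  assumes "inj_on r {..p}" "x0 < x1"
  shows "inj_on (\<lambda>i. x0 + (r i + 1)/2 * (x1 - x0)) {..p}"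
proof (rule inj_onI)
  fix i j assume "i \<in> {..p}" "j \<in> {..p}" "x0 + (r i + 1)/2 * (x1 - x0) = x0 + (r j + 1)/2 * (x1 - x0)"
  thus "i = j" using assms by (auto simp: inj_on_def)
qed

lemma poly_A: "poly [:x0 + (x1-x0)/2, (x1-x0)/2:] y = x0 + (y + 1)/2 * (x1 - (x0::real))"
  by (simp add: field_simps)

lemma elem_avg:
  assumes p3: "p \<ge> 3" and gl: "gl_nodes (p-1) r" and r0: "r 0 = -1" and rp: "r p = 1"
    and h: "x0 < x1"
  shows "(1/2) * (\<Sum>i=1..p-1. gl_weight (p-1) r i * v i) =
         integral {x0..x1} (lagrange_interp p (\<lambda>i. x0 + (r i + 1)/2 * (x1 - x0)) v) / (x1 - x0)"
proof -
  define s where "s = (\<lambda>i. x0 + (r i + 1)/2 * (x1 - x0))"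
  define A where "A = [:x0 + (x1-x0)/2, (x1-x0)/2:]"
  define P where "P = LIp p s v"
  have inj: "inj_on s {..p}" unfolding s_def by (rule s_inj[OF r_inj[OF p3 gl r0 rp] h])
  have degA: "degree A = 1" using h by (simp add: A_def)
  have deg: "degree (pcompose P A) \<le> 2 * (p-1) - 1"
    using degree_LIp[of p s v] p3 by (simp add: degree_pcompose degA P_def)
  have "integral {x0..x1} (lagrange_interp p s v) = (x1 - x0)/2 * integral {-1..1} (poly (pcompose P A))"
    unfolding lagrange_LIp P_def A_def by (rule subst_affine[OF h])
  also have "integral {-1..1} (poly (pcompose P A)) = (\<Sum>i=1..p-1. gl_weight (p-1) r i * poly (pcompose P A) (r i))"
    by (rule gauss_quad[OF gl _ deg]) (use p3 in simp)
  also have "\<dots> = (\<Sum>i=1..p-1. gl_weight (p-1) r i * v i)"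
  proof (intro sum.cong refl)
    fix i assume i: "i \<in> {1..p-1}"
    have "poly (pcompose P A) (r i) = lagrange_interp p s v (s i)"
      by (simp only: poly_pcompose A_def poly_A) (simp add: P_def lagrange_LIp s_def)
    also have "\<dots> = v i" by (rule lagrange_node[OF inj]) (use i in auto)
    finally show "gl_weight (p-1) r i * poly (pcompose P A) (r i) = gl_weight (p-1) r i * v i" by simp
  qed
  finally show ?thesis using h by (simp add: s_def field_simps)
qed

lemma elem_deriv:
  assumes p3: "p \<ge> 3" and gl: "gl_nodes (p-1) r" and r0: "r 0 = -1" and rp: "r p = 1"
    and h: "x0 < x1"
  defines "s \<equiv> (\<lambda>i. x0 + (r i + 1)/2 * (x1 - x0))"
  shows "(\<Sum>i=1..p-1. gl_weight (p-1) r i * deriv (lagrange_interp p s v) (s i)) = 2 * (v p - v 0) / (x1 - x0)"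
proof -
  define A where "A = [:x0 + (x1-x0)/2, (x1-x0)/2:]"
  define P where "P = LIp p s v"
  define G where "G = pcompose P A"
  have inj: "inj_on s {..p}" unfolding s_def by (rule s_inj[OF r_inj[OF p3 gl r0 rp] h])
  have degA: "degree A = 1" using h by (simp add: A_def)
  have deg: "degree (pderiv G) \<le> 2 * (p-1) - 1"
    using degree_LIp[of p s v] p3 by (simp add: degree_pderiv G_def degree_pcompose degA P_def)
  have pG: "poly G y = lagrange_interp p s v (x0 + (y + 1)/2 * (x1 - x0))" for y
    by (simp only: G_def poly_pcompose A_def poly_A) (simp add: P_def lagrange_LIp)
  have pdG: "poly (pderiv G) y = poly (pderiv P) (x0 + (y + 1)/2 * (x1 - x0)) * ((x1 - x0)/2)" for y
    unfolding G_def pderiv_pcompose poly_mult poly_pcompose A_def poly_A by (simp add: pderiv_pCons)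
  have "integral {-1..1} (poly (pderiv G)) = poly G 1 - poly G (-1)"
    by (rule ftc_poly) simp
  also have "\<dots> = lagrange_interp p s v (s p) - lagrange_interp p s v (s 0)"
    by (simp only: pG s_def r0 rp)
  also have "\<dots> = v p - v 0" using lagrange_node[OF inj, of p v] lagrange_node[OF inj, of 0 v] by simp
  finally have I1: "integral {-1..1} (poly (pderiv G)) = v p - v 0" .
  have I2: "integral {-1..1} (poly (pderiv G)) = (\<Sum>i=1..p-1. gl_weight (p-1) r i * poly (pderiv G) (r i))"
    by (rule gauss_quad[OF gl _ deg]) (use p3 in simp)
  have pd: "poly (pderiv G) (r i) = deriv (lagrange_interp p s v) (s i) * ((x1 - x0)/2)" for i
    by (simp add: pdG lagrange_LIp P_def s_def DERIV_imp_deriv[OF poly_DERIV])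
  have I3: "(\<Sum>i=1..p-1. gl_weight (p-1) r i * poly (pderiv G) (r i)) =
     (\<Sum>i=1..p-1. gl_weight (p-1) r i * deriv (lagrange_interp p s v) (s i)) * ((x1 - x0)/2)"
    unfolding sum_distrib_right pd by (simp add: mult.assoc)
  have "(\<Sum>i=1..p-1. gl_weight (p-1) r i * deriv (lagrange_interp p s v) (s i)) * ((x1 - x0)/2) = v p - v 0"
    unfolding I3[symmetric] I2[symmetric] I1 ..
  thus ?thesis using h by (simp add: field_simps)
qed



theorem mainTheorem4:
  fixes p N :: nat and x r :: "nat \<Rightarrow> real" and F dF :: "real \<Rightarrow> real"
    and u :: "real \<Rightarrow> nat \<Rightarrow> nat \<Rightarrow> real" and a b :: real
  assumes p3: "p \<ge> 3" and N1: "N \<ge> 1"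
    and mesh0: "x 0 = 0" and mesh1: "x N = 1" and mesh_mono: "\<forall>k<N. x k < x (Suc k)"
    and F_deriv: "\<forall>v. (F has_real_derivative dF v) (at v)" and dF_cont: "continuous_on UNIV dF"
    and r0: "r 0 = -1" and rp: "r p = 1" and r_gl: "gl_nodes (p - 1) r"
    and shared: "\<forall>t\<in>{a<..<b}. \<forall>k\<in>{1..N}. u t p k = u t 0 (next_el N k)"
    and interior: "\<forall>t\<in>{a<..<b}. \<forall>k\<in>{1..N}. \<forall>i\<in>{1..p-1}.
        ((\<lambda>\<tau>. u \<tau> i k) has_real_derivative
          - deriv (lagrange_interp p (fuse_node x r k) (\<lambda>j. F (u t j k))) (fuse_node x r k i)) (at t)"
    and boundary: "\<forall>t\<in>{a<..<b}. \<forall>k\<in>{1..N}.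
        ((\<lambda>\<tau>. u \<tau> p k) has_real_derivative
          (if dF (u t p k) > 0
           then - deriv (lagrange_interp p (fuse_node x r k) (\<lambda>j. F (u t j k))) (fuse_node x r k p)
           else - deriv (lagrange_interp p (fuse_node x r (next_el N k)) (\<lambda>j. F (u t j (next_el N k))))
                   (fuse_node x r (next_el N k) 0))) (at t)"
  defines "ubar \<equiv> \<lambda>t k. (1/2) * (\<Sum>i=1..p-1. gl_weight (p - 1) r i * u t i k)"
  shows "(\<forall>t. \<forall>k\<in>{1..N}. ubar t k =
            integral {x (k - 1)..x k} (lagrange_interp p (fuse_node x r k) (\<lambda>i. u t i k)) / (x k - x (k - 1)))
       \<and> (\<forall>t\<in>{a<..<b}. \<forall>k\<in>{1..N}. ((\<lambda>\<tau>. ubar \<tau> k) has_real_derivative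
            - (F (u t p k) - F (u t 0 k)) / (x k - x (k - 1))) (at t))
       \<and> (\<forall>t\<in>{a<..<b}. ((\<lambda>\<tau>. \<Sum>k=1..N. (x k - x (k - 1)) * ubar \<tau> k) has_real_derivative 0) (at t))"
proof -
  have hk: "x (k - 1) < x k" if "k \<in> {1..N}" for k
    using mesh_mono that by (metis Suc_diff_1 atLeastAtMost_iff diff_less less_le_trans zero_less_one)
  have fn: "fuse_node x r k = (\<lambda>i. x (k - 1) + (r i + 1)/2 * (x k - x (k - 1)))" for k
    by (simp add: fuse_node_def fun_eq_iff)
  have P1: "\<forall>t. \<forall>k\<in>{1..N}. ubar t k =
            integral {x (k - 1)..x k} (lagrange_interp p (fuse_node x r k) (\<lambda>i. u t i k)) / (x k - x (k - 1))"
    unfolding ubar_def fn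
  proof (intro allI ballI)
    fix t k assume k: "k \<in> {1..N}"
    show "1 / 2 * (\<Sum>i = 1..p - 1. gl_weight (p - 1) r i * u t i k) =
       integral {x (k - 1)..x k} (lagrange_interp p (\<lambda>i. x (k - 1) + (r i + 1) / 2 * (x k - x (k - 1))) (\<lambda>i. u t i k)) / (x k - x (k - 1))"
      by (rule elem_avg[OF p3 r_gl r0 rp hk[OF k]])
  qed
  have P2: "\<forall>t\<in>{a<..<b}. \<forall>k\<in>{1..N}. ((\<lambda>\<tau>. ubar \<tau> k) has_real_derivative
            - (F (u t p k) - F (u t 0 k)) / (x k - x (k - 1))) (at t)"
  proof (intro ballI)
    fix t k assume t: "t \<in> {a<..<b}" and k: "k \<in> {1..N}"
    define s where "s = fuse_node x r k"
    define dd where "dd = (\<lambda>i. deriv (lagrange_interp p s (\<lambda>j. F (u t j k))) (s i))"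
    have Di: "((\<lambda>\<tau>. gl_weight (p - 1) r i * u \<tau> i k) has_real_derivative gl_weight (p - 1) r i * (- dd i)) (at t)"
      if i: "i \<in> {1..p-1}" for i
      using interior t k i unfolding dd_def s_def by (intro DERIV_cmult) blast
    have "((\<lambda>\<tau>. \<Sum>i=1..p-1. gl_weight (p - 1) r i * u \<tau> i k) has_real_derivative
              (\<Sum>i=1..p-1. gl_weight (p - 1) r i * (- dd i))) (at t)"
      by (rule DERIV_sum) (rule Di)
    hence D: "((\<lambda>\<tau>. ubar \<tau> k) has_real_derivative
              (1/2) * (\<Sum>i=1..p-1. gl_weight (p - 1) r i * (- dd i))) (at t)"
      unfolding ubar_def by (rule DERIV_cmult)
    have "(\<Sum>i=1..p-1. gl_weight (p - 1) r i * dd i) = 2 * (F (u t p k) - F (u t 0 k)) / (x k - x (k - 1))"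
      unfolding dd_def s_def fn by (rule elem_deriv[OF p3 r_gl r0 rp hk[OF k]])
    moreover have "(\<Sum>i=1..p-1. gl_weight (p - 1) r i * (- dd i)) = - (\<Sum>i=1..p-1. gl_weight (p - 1) r i * dd i)"
      by (simp add: sum_negf)
    moreover have hne: "x k - x (k - 1) \<noteq> 0" using hk[OF k] by simp
    ultimately have E: "(1/2) * (\<Sum>i=1..p-1. gl_weight (p - 1) r i * (- dd i)) = - (F (u t p k) - F (u t 0 k)) / (x k - x (k - 1))"
      by (simp add: field_simps)
    from D show "((\<lambda>\<tau>. ubar \<tau> k) has_real_derivative
            - (F (u t p k) - F (u t 0 k)) / (x k - x (k - 1))) (at t)" by (simp only: E)
  qed
  have P3: "\<forall>t\<in>{a<..<b}. ((\<lambda>\<tau>. \<Sum>k=1..N. (x k - x (k - 1)) * ubar \<tau> k) has_real_derivative 0) (at t)"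
  proof
    fix t assume t: "t \<in> {a<..<b}"
    have D: "((\<lambda>\<tau>. \<Sum>k=1..N. (x k - x (k - 1)) * ubar \<tau> k) has_real_derivative
      (\<Sum>k=1..N. (x k - x (k - 1)) * (- (F (u t p k) - F (u t 0 k)) / (x k - x (k - 1))))) (at t)"
      using P2 t by (intro DERIV_sum DERIV_cmult) auto
    have "(\<Sum>k=1..N. (x k - x (k - 1)) * (- (F (u t p k) - F (u t 0 k)) / (x k - x (k - 1))))
        = (\<Sum>k=1..N. F (u t 0 k) - F (u t 0 (next_el N k)))"
    proof (intro sum.cong refl)
      fix k assume k: "k \<in> {1..N}"
      have "x k - x (k - 1) \<noteq> 0" using hk[OF k] by simp
      thus "(x k - x (k - 1)) * (- (F (u t p k) - F (u t 0 k)) / (x k - x (k - 1))) = F (u t 0 k) - F (u t 0 (next_el N k))"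
        using shared t k by simp
    qed
    also have "\<dots> = 0"
      using next_el_sum[OF N1, of "\<lambda>k. F (u t 0 k)"] by (simp add: sum_subtractf)
    finally show "((\<lambda>\<tau>. \<Sum>k=1..N. (x k - x (k - 1)) * ubar \<tau> k) has_real_derivative 0) (at t)"
      using D by simp
  qed
  show ?thesis using P1 P2 P3 by blast
qed


end
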